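(* Let $\vec{\mathcal X}$ be a couple of translation invariant pseudolattices and $\vec B=(B_0,B_1)$ a complex Banach couple. Let $\{f_n\}_{n\in\mathbb Z}\in\mathcal J(\vec{\mathcal X},\vec B)$ and $f(z)=\sum_{n\in\mathbb Z}z^nf_n$, $z\in\mathbb A$. Suppose $f(s)=0$ for some $s\in\mathbb A$, and define $g:\mathbb A\to B_0+B_1$ by $g(s)=f'(s)$ and $g(z)=f(z)/(z-s)$ for $z\ne s$. Then $g\in\mathcal F_{\vec{\mathcal X}}(\vec B)$, and the Laurent coefficients $\{g_n\}$ of $g$ on $\mathbb A$ (i.e. $g(z)=\sum_n z^ng_n$) satisfy $\{g_n\}\in\mathcal J(\vec{\mathcal X},\vec B)$ and $$\|\{g_n\}\|_{\mathcal J(\vec{\mathcal X},\vec B)}\le\delta(s)\|\{f_n\}\|_{\mathcal J(\vec{\mathcal X},\vec B)},\qquad \delta(s)=\max\{(|s|-1)^{-1},(e-|s|)^{-1}\}.$$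
   Context: A pseudolattice $\mathcal{X}$ assigns to every complex Banach space $B$ a Banach space $\mathcal{X}(B)$ of two-sided sequences in $B$ such that: $\mathcal X(A)$ is a closed subspace of $\mathcal X(B)$ when $A$ is a closed subspace of $B$; $\|\{Ta_n\}\|_{\mathcal{X}(B)}\le C\|T\|\|\{a_n\}\|_{\mathcal{X}(A)}$ for bounded linear $T:A\to B$ with a fixed $C$; and $\|b_m\|_B\le\|\{b_n\}\|_{\mathcal{X}(B)}$. A couple $(\mathcal X_0,\mathcal X_1)$ is translation invariant if the shifts $\{b_n\}\mapsto\{b_{n+k}\}$, $k\in\mathbb Z$, are isometries of each $\mathcal X_j(B)$ onto itself for every $B$. $\mathcal{J}(\vec{\mathcal{X}},\vec B)$ is the Banach space of sequences $\{b_n\}\subset B_0\cap B_1$ with norm $\max\{\|\{b_n\}\|_{\mathcal{X}_0(B_0)},\|\{e^nb_n\}\|_{\mathcal{X}_1(B_1)}\}<\infty$. $\mathbb{A}=\{z\in\mathbb C:1<|z|<e\}$. $\mathcal{F}_{\vec{\mathcal{X}}}(\vec B)$ is the Banach space of analytic functions $f:\mathbb{A}\to B_0+B_1$, $f(z)=\sum_n z^nb_n$ with $\{b_n\}\in\mathcal{J}(\vec{\mathcal{X}},\vec B)$, normed by $\|\{b_n\}\|_{\mathcal J}$. *)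

theory Defs
  imports "HOL-Analysis.Analysis" "HOL-Library.Function_Algebras"
begin

text \<open>Complex Banach spaces are modelled inside a fixed ambient complex vector
 space (type 'v with complex scalar multiplication sc): a Banach space is a pair
 (S, N) of a complex subspace S and a function N that is a complete norm on S.\<close>

definition csubspace :: "(complex \<Rightarrow> 'a::ab_group_add \<Rightarrow> 'a) \<Rightarrow> 'a set \<Rightarrow> bool" where
  "csubspace sc S \<longleftrightarrow> 0 \<in> S \<and> (\<forall>x\<in>S. \<forall>y\<in>S. x + y \<in> S) \<and> (\<forall>c. \<forall>x\<in>S. sc c x \<in> S)"

definition cbanach :: "(complex \<Rightarrow> 'a::ab_group_add \<Rightarrow> 'a) \<Rightarrow> 'a set \<Rightarrow> ('a \<Rightarrow> real) \<Rightarrow> bool" where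
  "cbanach sc S N \<longleftrightarrow> csubspace sc S
     \<and> (\<forall>x\<in>S. N x \<ge> 0 \<and> (N x = 0 \<longleftrightarrow> x = 0))
     \<and> (\<forall>c. \<forall>x\<in>S. N (sc c x) = cmod c * N x)
     \<and> (\<forall>x\<in>S. \<forall>y\<in>S. N (x + y) \<le> N x + N y)
     \<and> (\<forall>u. (\<forall>n. u n \<in> S) \<and> (\<forall>\<epsilon>>0. \<exists>M. \<forall>m\<ge>M. \<forall>n\<ge>M. N (u m - u n) < \<epsilon>)
            \<longrightarrow> (\<exists>x\<in>S. (\<lambda>n. N (u n - x)) \<longlonglongrightarrow> 0))"

definition seqscale :: "(complex \<Rightarrow> 'v \<Rightarrow> 'v) \<Rightarrow> complex \<Rightarrow> (int \<Rightarrow> 'v) \<Rightarrow> (int \<Rightarrow> 'v)" where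
  "seqscale sc c b = (\<lambda>n. sc c (b n))"

definition closed_subspace_of :: "(complex \<Rightarrow> 'v::ab_group_add \<Rightarrow> 'v) \<Rightarrow> 'v set \<Rightarrow> ('v \<Rightarrow> real) \<Rightarrow> 'v set \<Rightarrow> ('v \<Rightarrow> real) \<Rightarrow> bool" where
  "closed_subspace_of sc S' N' S N \<longleftrightarrow> S' \<subseteq> S \<and> csubspace sc S' \<and> (\<forall>x\<in>S'. N' x = N x)
     \<and> (\<forall>u x. (\<forall>n. u n \<in> S') \<and> x \<in> S \<and> (\<lambda>n. N (u n - x)) \<longlonglongrightarrow> 0 \<longrightarrow> x \<in> S')"

definition bounded_op :: "(complex \<Rightarrow> 'v::ab_group_add \<Rightarrow> 'v) \<Rightarrow> 'v set \<Rightarrow> ('v \<Rightarrow> real) \<Rightarrow> 'v set \<Rightarrow> ('v \<Rightarrow> real) \<Rightarrow> ('v \<Rightarrow> 'v) \<Rightarrow> real \<Rightarrow> bool" where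
  "bounded_op sc SA NA SB NB T M \<longleftrightarrow> T ` SA \<subseteq> SB
     \<and> (\<forall>x\<in>SA. \<forall>y\<in>SA. T (x + y) = T x + T y) \<and> (\<forall>c. \<forall>x\<in>SA. T (sc c x) = sc c (T x))
     \<and> M \<ge> 0 \<and> (\<forall>x\<in>SA. NB (T x) \<le> M * NA x)"

text \<open>A pseudolattice: X S N = (X(B), norm of X(B)) for the Banach space B = (S, N).\<close>
type_synonym 'v pseudolat = "'v set \<Rightarrow> ('v \<Rightarrow> real) \<Rightarrow> (int \<Rightarrow> 'v) set \<times> ((int \<Rightarrow> 'v) \<Rightarrow> real)"

definition pseudolattice :: "(complex \<Rightarrow> 'v::ab_group_add \<Rightarrow> 'v) \<Rightarrow> 'v pseudolat \<Rightarrow> bool" where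
  "pseudolattice sc X \<longleftrightarrow>
     (\<forall>S N. cbanach sc S N \<longrightarrow>
        fst (X S N) \<subseteq> {b. \<forall>n. b n \<in> S}
        \<and> cbanach (seqscale sc) (fst (X S N)) (snd (X S N))
        \<and> (\<forall>b\<in>fst (X S N). \<forall>m. N (b m) \<le> snd (X S N) b))
   \<and> (\<forall>S N S' N'. cbanach sc S N \<and> closed_subspace_of sc S' N' S N \<longrightarrow>
        fst (X S' N') = fst (X S N) \<inter> {b. \<forall>n. b n \<in> S'}
        \<and> (\<forall>b\<in>fst (X S' N'). snd (X S' N') b = snd (X S N) b))
   \<and> (\<exists>C. \<forall>SA NA SB NB T M. cbanach sc SA NA \<and> cbanach sc SB NB \<and> bounded_op sc SA NA SB NB T M \<longrightarrow>
        (\<forall>b\<in>fst (X SA NA). T \<circ> b \<in> fst (X SB NB) \<and> snd (X SB NB) (T \<circ> b) \<le> C * M * snd (X SA NA) b))"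

definition translation_invariant :: "(complex \<Rightarrow> 'v::ab_group_add \<Rightarrow> 'v) \<Rightarrow> 'v pseudolat \<Rightarrow> bool" where
  "translation_invariant sc X \<longleftrightarrow>
     (\<forall>S N. cbanach sc S N \<longrightarrow> (\<forall>k::int. \<forall>b\<in>fst (X S N).
        (\<lambda>n. b (n + k)) \<in> fst (X S N) \<and> snd (X S N) (\<lambda>n. b (n + k)) = snd (X S N) b))"

definition sumspace :: "'v::ab_group_add set \<Rightarrow> 'v set \<Rightarrow> 'v set" where
  "sumspace S0 S1 = {a + b | a b. a \<in> S0 \<and> b \<in> S1}"

definition sumnorm :: "'v::ab_group_add set \<Rightarrow> ('v \<Rightarrow> real) \<Rightarrow> 'v set \<Rightarrow> ('v \<Rightarrow> real) \<Rightarrow> 'v \<Rightarrow> real" where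
  "sumnorm S0 N0 S1 N1 x = Inf {N0 a + N1 b | a b. a \<in> S0 \<and> b \<in> S1 \<and> x = a + b}"

text \<open>Banach couple: both spaces Banach, and B0 + B1 (with the K-norm) Hausdorff,
  i.e. the K-norm vanishes only at 0 (equivalent to compatibility).\<close>
definition banach_couple :: "(complex \<Rightarrow> 'v::ab_group_add \<Rightarrow> 'v) \<Rightarrow> 'v set \<Rightarrow> ('v \<Rightarrow> real) \<Rightarrow> 'v set \<Rightarrow> ('v \<Rightarrow> real) \<Rightarrow> bool" where
  "banach_couple sc S0 N0 S1 N1 \<longleftrightarrow> cbanach sc S0 N0 \<and> cbanach sc S1 N1
     \<and> (\<forall>x\<in>sumspace S0 S1. sumnorm S0 N0 S1 N1 x = 0 \<longrightarrow> x = 0)"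

definition Jset :: "(complex \<Rightarrow> 'v::ab_group_add \<Rightarrow> 'v) \<Rightarrow> 'v pseudolat \<Rightarrow> 'v pseudolat
     \<Rightarrow> 'v set \<Rightarrow> ('v \<Rightarrow> real) \<Rightarrow> 'v set \<Rightarrow> ('v \<Rightarrow> real) \<Rightarrow> (int \<Rightarrow> 'v) set" where
  "Jset sc X0 X1 S0 N0 S1 N1 = {b. (\<forall>n. b n \<in> S0 \<inter> S1) \<and> b \<in> fst (X0 S0 N0)
      \<and> (\<lambda>n. sc (complex_of_real (exp (real_of_int n))) (b n)) \<in> fst (X1 S1 N1)}"

definition Jnorm :: "(complex \<Rightarrow> 'v::ab_group_add \<Rightarrow> 'v) \<Rightarrow> 'v pseudolat \<Rightarrow> 'v pseudolat
     \<Rightarrow> 'v set \<Rightarrow> ('v \<Rightarrow> real) \<Rightarrow> 'v set \<Rightarrow> ('v \<Rightarrow> real) \<Rightarrow> (int \<Rightarrow> 'v) \<Rightarrow> real" where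
  "Jnorm sc X0 X1 S0 N0 S1 N1 b = max (snd (X0 S0 N0) b)
      (snd (X1 S1 N1) (\<lambda>n. sc (complex_of_real (exp (real_of_int n))) (b n)))"

definition annulus :: "complex set" where
  "annulus = {z. 1 < cmod z \<and> cmod z < exp 1}"

definition laurent_sums :: "(complex \<Rightarrow> 'v::ab_group_add \<Rightarrow> 'v) \<Rightarrow> 'v set \<Rightarrow> ('v \<Rightarrow> real) \<Rightarrow> 'v set \<Rightarrow> ('v \<Rightarrow> real)
     \<Rightarrow> (int \<Rightarrow> 'v) \<Rightarrow> complex \<Rightarrow> 'v \<Rightarrow> bool" where
  "laurent_sums sc S0 N0 S1 N1 b z y \<longleftrightarrow> y \<in> sumspace S0 S1 \<and>
     (\<lambda>K::nat. sumnorm S0 N0 S1 N1 ((\<Sum>n\<in>{- int K..int K}. sc (z powi n) (b n)) - y)) \<longlonglongrightarrow> 0"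

definition laurent_val :: "(complex \<Rightarrow> 'v::ab_group_add \<Rightarrow> 'v) \<Rightarrow> 'v set \<Rightarrow> ('v \<Rightarrow> real) \<Rightarrow> 'v set \<Rightarrow> ('v \<Rightarrow> real)
     \<Rightarrow> (int \<Rightarrow> 'v) \<Rightarrow> complex \<Rightarrow> 'v" where
  "laurent_val sc S0 N0 S1 N1 b z = (THE y. laurent_sums sc S0 N0 S1 N1 b z y)"

definition has_deriv_sum :: "(complex \<Rightarrow> 'v::ab_group_add \<Rightarrow> 'v) \<Rightarrow> 'v set \<Rightarrow> ('v \<Rightarrow> real) \<Rightarrow> 'v set \<Rightarrow> ('v \<Rightarrow> real)
     \<Rightarrow> (complex \<Rightarrow> 'v) \<Rightarrow> complex \<Rightarrow> 'v \<Rightarrow> bool" where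
  "has_deriv_sum sc S0 N0 S1 N1 F s D \<longleftrightarrow> D \<in> sumspace S0 S1 \<and>
     ((\<lambda>z. sumnorm S0 N0 S1 N1 (sc (1 / (z - s)) (F z - F s) - D)) \<longlongrightarrow> 0) (at s)"

definition in_F :: "(complex \<Rightarrow> 'v::ab_group_add \<Rightarrow> 'v) \<Rightarrow> 'v pseudolat \<Rightarrow> 'v pseudolat
     \<Rightarrow> 'v set \<Rightarrow> ('v \<Rightarrow> real) \<Rightarrow> 'v set \<Rightarrow> ('v \<Rightarrow> real) \<Rightarrow> (complex \<Rightarrow> 'v) \<Rightarrow> bool" where
  "in_F sc X0 X1 S0 N0 S1 N1 g \<longleftrightarrow> (\<exists>b\<in>Jset sc X0 X1 S0 N0 S1 N1.
      \<forall>z\<in>annulus. laurent_sums sc S0 N0 S1 N1 b z (g z))"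

end

theory Submission
  imports Defs
begin

locale cb = vector_space sc for sc :: "complex \<Rightarrow> 'v::ab_group_add \<Rightarrow> 'v" +
  fixes S :: "'v set" and N :: "'v \<Rightarrow> real"
  assumes cbn: "cbanach sc S N"
begin

lemma mem0: "0 \<in> S" and mem_add: "x \<in> S \<Longrightarrow> y \<in> S \<Longrightarrow> x + y \<in> S"
  and mem_sc: "x \<in> S \<Longrightarrow> sc c x \<in> S"
  using cbn unfolding cbanach_def csubspace_def by auto

lemma mem_neg: "x \<in> S \<Longrightarrow> - x \<in> S"
  using mem_sc[of x "-1"] by simp

lemma mem_diff: "x \<in> S \<Longrightarrow> y \<in> S \<Longrightarrow> x - y \<in> S"
  using mem_add[OF _ mem_neg[of y]] by (metis diff_conv_add_uminus)

lemma mem_sum: "(\<And>k. k \<in> A \<Longrightarrow> f k \<in> S) \<Longrightarrow> sum f A \<in> S"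
  by (induction A rule: infinite_finite_induct) (auto intro: mem0 mem_add)

lemma N_nonneg: "x \<in> S \<Longrightarrow> N x \<ge> 0" and N_eq0: "x \<in> S \<Longrightarrow> N x = 0 \<longleftrightarrow> x = 0"
  and N_sc: "x \<in> S \<Longrightarrow> N (sc c x) = cmod c * N x"
  and N_tri: "x \<in> S \<Longrightarrow> y \<in> S \<Longrightarrow> N (x + y) \<le> N x + N y"
  using cbn unfolding cbanach_def by auto

lemma N_zero[simp]: "N 0 = 0" using N_eq0[OF mem0] by simp

lemma N_neg: "x \<in> S \<Longrightarrow> N (- x) = N x"
  using N_sc[of x "-1"] by simp

lemma N_commute: "x \<in> S \<Longrightarrow> y \<in> S \<Longrightarrow> N (x - y) = N (y - x)"
  using N_neg[OF mem_diff[of x y]] by simp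

lemma N_tri3: "x \<in> S \<Longrightarrow> y \<in> S \<Longrightarrow> z \<in> S \<Longrightarrow> N (x - z) \<le> N (x - y) + N (y - z)"
  using N_tri[OF mem_diff[of x y] mem_diff[of y z]] by simp

lemma N_sum: "(\<And>k. k \<in> A \<Longrightarrow> f k \<in> S) \<Longrightarrow> N (sum f A) \<le> (\<Sum>k\<in>A. N (f k))"
proof (induction A rule: infinite_finite_induct)
  case (insert x F)
  then have "N (sum f (insert x F)) \<le> N (f x) + N (sum f F)"
    by (simp add: N_tri mem_sum)
  with insert show ?case by simp
qed auto

lemma complete: "(\<And>n. u n \<in> S) \<Longrightarrow> (\<And>\<epsilon>. \<epsilon> > 0 \<Longrightarrow> \<exists>M. \<forall>m\<ge>M. \<forall>n\<ge>M. N (u m - u n) < \<epsilon>)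
   \<Longrightarrow> \<exists>x\<in>S. (\<lambda>n. N (u n - x)) \<longlonglongrightarrow> 0"
  using cbn unfolding cbanach_def by blast

lemma lim_unique:
  assumes "\<And>n. u n \<in> S" "x \<in> S" "y \<in> S" "(\<lambda>n. N (u n - x)) \<longlonglongrightarrow> 0" "(\<lambda>n. N (u n - y)) \<longlonglongrightarrow> 0"
  shows "x = y"
proof -
  have le: "N (x - y) \<le> N (u n - x) + N (u n - y)" for n
    using N_tri3[OF assms(2) assms(1)[of n] assms(3)] N_commute[OF assms(1)[of n] assms(2)] by simp
  have "(\<lambda>n. N (u n - x) + N (u n - y)) \<longlonglongrightarrow> 0"
    using tendsto_add[OF assms(4,5)] by simp
  then have "N (x - y) \<le> 0"
    using le by (intro tendsto_le[OF _ _ tendsto_const]) auto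
  then have "N (x - y) = 0" using N_nonneg[OF mem_diff[OF assms(2,3)]] by simp
  then show ?thesis using N_eq0[OF mem_diff[OF assms(2,3)]] by simp
qed

lemma conv_sc:
  assumes "\<And>n. u n \<in> S" "x \<in> S" "(\<lambda>n. N (u n - x)) \<longlonglongrightarrow> 0"
  shows "(\<lambda>n. N (sc c (u n) - sc c x)) \<longlonglongrightarrow> 0"
proof -
  have "N (sc c (u n) - sc c x) = cmod c * N (u n - x)" for n
    using N_sc[OF mem_diff[OF assms(1)[of n] assms(2)], of c] by (simp add: scale_right_diff_distrib)
  then show ?thesis using tendsto_mult_right_zero[OF assms(3), of "cmod c"] by simp
qed

definition blim :: "(nat \<Rightarrow> 'v) \<Rightarrow> 'v" where
  "blim u = (SOME x. x \<in> S \<and> (\<lambda>n. N (u n - x)) \<longlonglongrightarrow> 0)"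

lemma blim:
  assumes "x \<in> S" "(\<lambda>n. N (u n - x)) \<longlonglongrightarrow> 0" "\<And>n. u n \<in> S"
  shows "blim u = x"
proof -
  have *: "blim u \<in> S \<and> (\<lambda>n. N (u n - blim u)) \<longlonglongrightarrow> 0"
    unfolding blim_def by (rule someI[of _ x]) (use assms in auto)
  show ?thesis using lim_unique[OF assms(3) _ assms(1) _ assms(2)] * by blast
qed

lemma series:
  assumes u: "\<And>k. u k \<in> S" and a: "\<And>k. N (u k) \<le> a k" and sa: "summable a"
  shows "\<exists>x\<in>S. (\<lambda>n. N ((\<Sum>k<n. u k) - x)) \<longlonglongrightarrow> 0 \<and> N x \<le> suminf a"
proof -
  have a0: "a k \<ge> 0" for k using a[of k] N_nonneg[OF u[of k]] by simp
  have ps: "(\<Sum>k<n. u k) \<in> S" for n by (rule mem_sum) (use u in auto)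
  have diff: "N ((\<Sum>k<m. u k) - (\<Sum>k<n. u k)) \<le> (\<Sum>k\<in>{n..<m}. a k)" if "n \<le> m" for m n
  proof -
    have "(\<Sum>k<m. u k) - (\<Sum>k<n. u k) = (\<Sum>k\<in>{n..<m}. u k)"
      using sum_diff_nat_ivl[of 0 n m u] that by (simp add: lessThan_atLeast0)
    also have "N \<dots> \<le> (\<Sum>k\<in>{n..<m}. N (u k))" by (rule N_sum) (use u in auto)
    also have "\<dots> \<le> (\<Sum>k\<in>{n..<m}. a k)" by (rule sum_mono) (use a in auto)
    finally show ?thesis .
  qed
  have "\<exists>x\<in>S. (\<lambda>n. N ((\<Sum>k<n. u k) - x)) \<longlonglongrightarrow> 0"
  proof (rule complete[OF ps])
    fix e :: real assume "e > 0"
    then obtain M where M: "\<forall>m\<ge>M. \<forall>n. norm (sum a {m..<n}) < e"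
      using sa unfolding summable_Cauchy by blast
    show "\<exists>M. \<forall>m\<ge>M. \<forall>n\<ge>M. N ((\<Sum>k<m. u k) - (\<Sum>k<n. u k)) < e"
    proof (intro exI allI impI)
      fix m n assume mn: "M \<le> m" "M \<le> n"
      show "N ((\<Sum>k<m. u k) - (\<Sum>k<n. u k)) < e"
      proof (cases "n \<le> m")
        case True
        have "sum a {n..<m} \<le> norm (sum a {n..<m})" by simp
        moreover have "norm (sum a {n..<m}) < e" using M mn(2) by blast
        ultimately show ?thesis using diff[OF True] by linarith
      next
        case False
        have "sum a {m..<n} \<le> norm (sum a {m..<n})" by simp
        moreover have "norm (sum a {m..<n}) < e" using M mn(1) by blast
        ultimately show ?thesis using diff[of m n] False N_commute[OF ps ps, of m n] by linarith
      qed
    qed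
  qed
  then obtain x where x: "x \<in> S" "(\<lambda>n. N ((\<Sum>k<n. u k) - x)) \<longlonglongrightarrow> 0" by blast
  have "N x \<le> N ((\<Sum>k<n. u k) - x) + suminf a" for n
  proof -
    have "N x \<le> N (x - (\<Sum>k<n. u k)) + N (\<Sum>k<n. u k)"
      using N_tri[OF mem_diff[OF x(1) ps[of n]] ps[of n]] by simp
    also have "N (\<Sum>k<n. u k) \<le> (\<Sum>k<n. a k)"
      using N_sum[of "{..<n}" u] u a sum_mono[of "{..<n}" "\<lambda>k. N (u k)" a] by force
    also have "(\<Sum>k<n. a k) \<le> suminf a" using sa a0 by (intro sum_le_suminf) auto
    finally show ?thesis using N_commute[OF x(1) ps, of n] by simp
  qed
  then have "N x \<le> 0 + suminf a"
    by (intro tendsto_le[OF _ tendsto_add[OF x(2) tendsto_const] tendsto_const]) auto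
  then show ?thesis using x by auto
qed

end


lemma pow_diff_bound:
  fixes w w0 :: complex assumes "cmod w \<le> r" "cmod w0 \<le> r" "r > 0"
  shows "cmod (w^k - w0^k) \<le> real k * r^k * cmod (w - w0) / r"
proof (induction k)
  case 0 then show ?case by simp
next
  case (Suc k)
  have eq: "w^Suc k - w0^Suc k = w * (w^k - w0^k) + (w - w0) * w0^k" by (simp add: algebra_simps)
  have "cmod (w^Suc k - w0^Suc k) \<le> cmod w * cmod (w^k - w0^k) + cmod (w - w0) * cmod w0 ^ k"
    unfolding eq by (metis norm_mult norm_power norm_triangle_ineq)
  also have "\<dots> \<le> r * (real k * r^k * cmod (w - w0) / r) + cmod (w - w0) * r ^ k"
    using assms Suc by (intro add_mono mult_mono power_mono) auto
  also have "\<dots> = real (Suc k) * r^Suc k * cmod (w - w0) / r" using assms(3) by (simp add: field_simps)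
  finally show ?case .
qed

lemma summable_nx:
  fixes x :: real assumes "0 \<le> x" "x < 1"
  shows "summable (\<lambda>k. real k * x^k)"
proof -
  have "summable (\<lambda>n. diffs (\<lambda>_. 1::real) n * x^n)"
    by (rule termdiff_converges[where K=1]) (use assms in \<open>auto intro: summable_geometric\<close>)
  then have "summable (\<lambda>n. real (Suc n) * x^n)" by (simp add: diffs_def)
  then show ?thesis
  proof (rule summable_comparison_test'[where N=0])
    fix n :: nat
    have "real n * x^n \<le> real (Suc n) * x^n" using assms by (intro mult_right_mono) auto
    then show "norm (real n * x^n) \<le> real (Suc n) * x^n" using assms by simp
  qed
qed

context cb begin

definition PS :: "(nat \<Rightarrow> 'v) \<Rightarrow> complex \<Rightarrow> 'v" where
  "PS c w = blim (\<lambda>n. \<Sum>k<n. sc (w^k) (c k))"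

lemma PS_conv:
  assumes c: "\<And>k. c k \<in> S" and b: "\<And>k. N (c k) \<le> C * q^k" and q: "q \<ge> 0" and w: "cmod w * q < 1"
  shows "PS c w \<in> S \<and> (\<lambda>n. N ((\<Sum>k<n. sc (w^k) (c k)) - PS c w)) \<longlonglongrightarrow> 0"
proof -
  have "\<exists>x\<in>S. (\<lambda>n. N ((\<Sum>k<n. sc (w^k) (c k)) - x)) \<longlonglongrightarrow> 0 \<and> N x \<le> suminf (\<lambda>k. C * (cmod w * q)^k)"
  proof (rule series)
    show "sc (w^k) (c k) \<in> S" for k using c mem_sc by auto
    show "N (sc (w^k) (c k)) \<le> C * (cmod w * q)^k" for k
    proof -
      have "N (sc (w^k) (c k)) = cmod w ^ k * N (c k)" using N_sc[OF c] by (simp add: norm_power)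
      also have "\<dots> \<le> cmod w ^ k * (C * q^k)" using b by (intro mult_left_mono) auto
      also have "\<dots> = C * (cmod w * q)^k" by (simp add: power_mult_distrib)
      finally show ?thesis .
    qed
    show "summable (\<lambda>k. C * (cmod w * q)^k)"
      using w q by (intro summable_mult summable_geometric) auto
  qed
  then obtain x where x: "x \<in> S" "(\<lambda>n. N ((\<Sum>k<n. sc (w^k) (c k)) - x)) \<longlonglongrightarrow> 0" by blast
  have "PS c w = x" unfolding PS_def by (rule blim[OF x]) (auto intro!: mem_sum mem_sc c)
  then show ?thesis using x by simp
qed

lemma PS_shift:
  assumes c: "\<And>k. c k \<in> S" and b: "\<And>k. N (c k) \<le> C * q^k" and q: "q \<ge> 0" and w: "cmod w * q < 1"
  shows "PS c w = c 0 + sc w (PS (\<lambda>k. c (Suc k)) w)"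
proof -
  have c': "\<And>k. c (Suc k) \<in> S" and b': "\<And>k. N (c (Suc k)) \<le> (C * q) * q^k"
  proof -
    show "c (Suc k) \<in> S" for k using c by simp
    show "N (c (Suc k)) \<le> (C * q) * q^k" for k using b[of "Suc k"] by (simp add: mult.assoc)
  qed
  note P = PS_conv[OF c b q w]
  note P' = PS_conv[OF c' b' q w]
  let ?X = "c 0 + sc w (PS (\<lambda>k. c (Suc k)) w)"
  have XS: "?X \<in> S" using P' c mem_add mem_sc by auto
  have eq: "(\<Sum>k<Suc n. sc (w^k) (c k)) - ?X = sc w ((\<Sum>k<n. sc (w^k) (c (Suc k))) - PS (\<lambda>k. c (Suc k)) w)" for n
  proof -
    have "(\<Sum>k<Suc n. sc (w^k) (c k)) = c 0 + (\<Sum>k<n. sc (w^Suc k) (c (Suc k)))"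
      by (subst sum.lessThan_Suc_shift) simp
    then show ?thesis by (simp add: scale_sum_right scale_right_diff_distrib)
  qed
  have "(\<lambda>n. N (sc w ((\<Sum>k<n. sc (w^k) (c (Suc k))) - PS (\<lambda>k. c (Suc k)) w))) \<longlonglongrightarrow> 0"
    using conv_sc[of "\<lambda>n. \<Sum>k<n. sc (w^k) (c (Suc k))" "PS (\<lambda>k. c (Suc k)) w" w] P' c'
    by (simp add: mem_sum mem_sc scale_right_diff_distrib)
  then have "(\<lambda>n. N ((\<Sum>k<Suc n. sc (w^k) (c k)) - ?X)) \<longlonglongrightarrow> 0" unfolding eq .
  then have "(\<lambda>n. N ((\<Sum>k<n. sc (w^k) (c k)) - ?X)) \<longlonglongrightarrow> 0" by (rule LIMSEQ_imp_Suc)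
  then show ?thesis using lim_unique[of "\<lambda>n. \<Sum>k<n. sc (w^k) (c k)" "PS c w" ?X] P XS c
    by (auto simp: mem_sum mem_sc)
qed

lemma PS_lip:
  assumes c: "\<And>k. c k \<in> S" and b: "\<And>k. N (c k) \<le> C * q^k" and q: "q > 0"
    and r: "r > 0" "r * q < 1" and w: "cmod w \<le> r" and w0: "cmod w0 \<le> r"
  shows "N (PS c w - PS c w0) \<le> cmod (w - w0) * (C / r * (\<Sum>k. real k * (r*q)^k))"
proof -
  have C: "C \<ge> 0" using b[of 0] N_nonneg[OF c[of 0]] by simp
  have wq: "cmod w * q < 1" using w q r by (meson le_less_trans mult_right_mono less_imp_le)
  have w0q: "cmod w0 * q < 1" using w0 q r by (meson le_less_trans mult_right_mono less_imp_le)
  note P = PS_conv[OF c b less_imp_le[OF q] wq] and P0 = PS_conv[OF c b less_imp_le[OF q] w0q]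
  have sm: "summable (\<lambda>k. real k * (r*q)^k)" using r q by (intro summable_nx) auto
  let ?p = "\<lambda>w n. \<Sum>k<n. sc (w^k) (c k)"
  have pS: "?p v n \<in> S" for v n by (auto intro!: mem_sum mem_sc c)
  have mid: "N (?p w n - ?p w0 n) \<le> cmod (w - w0) * (C / r * (\<Sum>k. real k * (r*q)^k))" for n
  proof -
    have "?p w n - ?p w0 n = (\<Sum>k<n. sc (w^k - w0^k) (c k))"
      by (simp add: sum_subtractf scale_left_diff_distrib)
    also have "N \<dots> \<le> (\<Sum>k<n. N (sc (w^k - w0^k) (c k)))" by (rule N_sum) (auto intro: mem_sc c)
    also have "\<dots> \<le> (\<Sum>k<n. cmod (w - w0) * (C / r) * (real k * (r*q)^k))"
    proof (rule sum_mono)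
      fix k
      have "N (sc (w^k - w0^k) (c k)) = cmod (w^k - w0^k) * N (c k)" using N_sc[OF c] by simp
      also have "\<dots> \<le> (real k * r^k * cmod (w - w0) / r) * (C * q^k)"
        using pow_diff_bound[OF w w0 r(1), of k] b[of k] N_nonneg[OF c[of k]] r
        by (intro mult_mono) (simp_all add: divide_nonneg_pos)
      also have "\<dots> = cmod (w - w0) * (C / r) * (real k * (r*q)^k)" by (simp add: power_mult_distrib)
      finally show "N (sc (w^k - w0^k) (c k)) \<le> cmod (w - w0) * (C / r) * (real k * (r*q)^k)" .
    qed
    also have "\<dots> = cmod (w - w0) * (C / r) * (\<Sum>k<n. real k * (r*q)^k)" by (simp add: sum_distrib_left)
    also have "\<dots> \<le> cmod (w - w0) * (C / r) * (\<Sum>k. real k * (r*q)^k)"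
    proof (rule mult_left_mono)
      show "(\<Sum>k<n. real k * (r*q)^k) \<le> (\<Sum>k. real k * (r*q)^k)"
        using sm r q by (intro sum_le_suminf) auto
      show "0 \<le> cmod (w - w0) * (C / r)" using C r by simp
    qed
    finally show ?thesis by simp
  qed
  have le: "N (PS c w - PS c w0) \<le> N (?p w n - PS c w) + cmod (w - w0) * (C / r * (\<Sum>k. real k * (r*q)^k)) + N (?p w0 n - PS c w0)" for n
  proof -
    have "N (PS c w - PS c w0) \<le> N (PS c w - ?p w n) + N (?p w n - PS c w0)"
      using N_tri3[of "PS c w" "?p w n" "PS c w0"] P P0 pS by simp
    also have "N (?p w n - PS c w0) \<le> N (?p w n - ?p w0 n) + N (?p w0 n - PS c w0)"
      using N_tri3[of "?p w n" "?p w0 n" "PS c w0"] P P0 pS by simp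
    finally show ?thesis using mid[of n] N_commute[of "PS c w" "?p w n"] P pS by simp
  qed
  have "(\<lambda>n. N (?p w n - PS c w) + cmod (w - w0) * (C / r * (\<Sum>k. real k * (r*q)^k)) + N (?p w0 n - PS c w0))
     \<longlonglongrightarrow> 0 + cmod (w - w0) * (C / r * (\<Sum>k. real k * (r*q)^k)) + 0"
    using P P0 by (intro tendsto_add tendsto_const) auto
  then show ?thesis using le by (intro tendsto_le[OF _ _ tendsto_const]) auto
qed

lemma PS_cont:
  assumes c: "\<And>k. c k \<in> S" and b: "\<And>k. N (c k) \<le> C * q^k" and q: "q > 0"
    and w0: "cmod w0 * q < 1" and lim: "(w \<longlongrightarrow> w0) F"
  shows "((\<lambda>x. N (PS c (w x) - PS c w0)) \<longlongrightarrow> 0) F"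
proof -
  define r where "r = (cmod w0 + 1/q) / 2"
  have r0: "r > 0" using q by (simp add: r_def add_nonneg_pos)
  have w0r: "cmod w0 < r" using w0 q by (simp add: r_def field_simps)
  have rq: "r * q < 1" using w0 q by (simp add: r_def field_simps)
  define K where "K = C / r * (\<Sum>k. real k * (r*q)^k)"
  have ev: "\<forall>\<^sub>F x in F. cmod (w x) \<le> r"
  proof -
    have "\<forall>\<^sub>F x in F. dist (w x) w0 < r - cmod w0" using lim w0r by (simp add: tendsto_iff)
    then show ?thesis
    proof eventually_elim
      case (elim x)
      have "cmod (w x) \<le> cmod w0 + cmod (w x - w0)" by (metis norm_triangle_sub add.commute)
      then show ?case using elim by (simp add: dist_norm)
    qed
  qed
  have d0: "((\<lambda>x. cmod (w x - w0) * K) \<longlongrightarrow> 0 * K) F"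
    by (intro tendsto_mult tendsto_const tendsto_norm_zero LIM_zero lim)
  show ?thesis
  proof (rule tendsto_sandwich[OF _ _ tendsto_const])
    show "\<forall>\<^sub>F n in F. 0 \<le> N (PS c (w n) - PS c w0)"
      using ev
    proof eventually_elim
      case (elim x)
      have "cmod (w x) * q < 1" using elim q rq by (meson le_less_trans mult_right_mono less_imp_le)
      then have "PS c (w x) \<in> S" using PS_conv[OF c b less_imp_le[OF q]] by blast
      moreover have "PS c w0 \<in> S" using PS_conv[OF c b less_imp_le[OF q] w0] by blast
      ultimately show ?case by (intro N_nonneg mem_diff)
    qed
    show "\<forall>\<^sub>F n in F. N (PS c (w n) - PS c w0) \<le> cmod (w n - w0) * K"
      using ev
    proof eventually_elim
      case (elim x)
      show ?case using PS_lip[OF c b q r0 rq elim less_imp_le[OF w0r]] unfolding K_def .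
    qed
    show "((\<lambda>x. cmod (w x - w0) * K) \<longlongrightarrow> 0) F" using d0 by simp
  qed
qed

end


lemma vs_seqscale: "vector_space sc \<Longrightarrow> vector_space (seqscale sc)"
  unfolding vector_space_def seqscale_def by (auto simp: fun_eq_iff)

locale couple = vector_space sc for sc :: "complex \<Rightarrow> 'v::ab_group_add \<Rightarrow> 'v" +
  fixes S0 :: "'v set" and N0 :: "'v \<Rightarrow> real" and S1 :: "'v set" and N1 :: "'v \<Rightarrow> real"
  assumes bc: "banach_couple sc S0 N0 S1 N1"
begin

sublocale B0: cb sc S0 N0
  by unfold_locales (use bc in \<open>simp add: banach_couple_def\<close>)
sublocale B1: cb sc S1 N1
  by unfold_locales (use bc in \<open>simp add: banach_couple_def\<close>)

abbreviation "SS \<equiv> sumspace S0 S1"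
abbreviation "sn \<equiv> sumnorm S0 N0 S1 N1"

lemma ss_intro: "a \<in> S0 \<Longrightarrow> b \<in> S1 \<Longrightarrow> a + b \<in> SS"
  unfolding sumspace_def by blast

lemma ss0: "a \<in> S0 \<Longrightarrow> a \<in> SS" using ss_intro[of a 0] B1.mem0 by simp
lemma ss1: "b \<in> S1 \<Longrightarrow> b \<in> SS" using ss_intro[of 0 b] B0.mem0 by simp

lemma ss_add: "x \<in> SS \<Longrightarrow> y \<in> SS \<Longrightarrow> x + y \<in> SS"
proof -
  assume "x \<in> SS" "y \<in> SS"
  then obtain a b a' b' where "a \<in> S0" "b \<in> S1" "x = a + b" "a' \<in> S0" "b' \<in> S1" "y = a' + b'"
    unfolding sumspace_def by blast
  then have "x + y = (a + a') + (b + b')" by (simp add: algebra_simps)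
  then show ?thesis using ss_intro B0.mem_add B1.mem_add \<open>a \<in> S0\<close> \<open>a' \<in> S0\<close> \<open>b \<in> S1\<close> \<open>b' \<in> S1\<close> by metis
qed

lemma ss_sc: "x \<in> SS \<Longrightarrow> sc c x \<in> SS"
proof -
  assume "x \<in> SS"
  then obtain a b where "a \<in> S0" "b \<in> S1" "x = a + b" unfolding sumspace_def by blast
  then show ?thesis using ss_intro[OF B0.mem_sc B1.mem_sc] by (simp add: scale_right_distrib)
qed

lemma ss_neg: "x \<in> SS \<Longrightarrow> - x \<in> SS" using ss_sc[of x "-1"] by simp
lemma ss_diff: "x \<in> SS \<Longrightarrow> y \<in> SS \<Longrightarrow> x - y \<in> SS"
  using ss_add[OF _ ss_neg[of y]] by (metis diff_conv_add_uminus)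
lemma ss_sum: "(\<And>k. k \<in> A \<Longrightarrow> f k \<in> SS) \<Longrightarrow> sum f A \<in> SS"
  by (induction A rule: infinite_finite_induct) (auto intro: ss0 B0.mem0 ss_add)

lemma sn_bdd: "bdd_below {N0 a + N1 b | a b. a \<in> S0 \<and> b \<in> S1 \<and> x = a + b}"
  by (rule bdd_belowI[of _ 0]) (auto intro!: add_nonneg_nonneg B0.N_nonneg B1.N_nonneg)

lemma sn_le: "a \<in> S0 \<Longrightarrow> b \<in> S1 \<Longrightarrow> sn (a + b) \<le> N0 a + N1 b"
  unfolding sumnorm_def by (rule cInf_lower[OF _ sn_bdd]) blast

lemma sn_le0: "a \<in> S0 \<Longrightarrow> sn a \<le> N0 a" using sn_le[of a 0] B1.mem0 by simp
lemma sn_le1: "b \<in> S1 \<Longrightarrow> sn b \<le> N1 b" using sn_le[of 0 b] B0.mem0 by simp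

lemma sn_ge: "x \<in> SS \<Longrightarrow> (\<And>a b. a \<in> S0 \<Longrightarrow> b \<in> S1 \<Longrightarrow> x = a + b \<Longrightarrow> t \<le> N0 a + N1 b) \<Longrightarrow> t \<le> sn x"
  unfolding sumnorm_def by (rule cInf_greatest) (auto simp: sumspace_def)

lemma sn_nonneg: "x \<in> SS \<Longrightarrow> 0 \<le> sn x"
  by (rule sn_ge) (auto intro!: add_nonneg_nonneg B0.N_nonneg B1.N_nonneg)

lemma sn_tri: assumes x: "x \<in> SS" and y: "y \<in> SS" shows "sn (x + y) \<le> sn x + sn y"
proof -
  have "sn (x + y) - (N0 a' + N1 b') \<le> sn x" if "a' \<in> S0" "b' \<in> S1" "y = a' + b'" for a' b'
  proof (rule sn_ge[OF x])
    fix a b assume ab: "a \<in> S0" "b \<in> S1" "x = a + b"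
    have "x + y = (a + a') + (b + b')" using ab that by (simp add: algebra_simps)
    then have "sn (x + y) \<le> N0 (a + a') + N1 (b + b')" using sn_le ab that B0.mem_add B1.mem_add by metis
    also have "\<dots> \<le> (N0 a + N0 a') + (N1 b + N1 b')" using ab that by (intro add_mono B0.N_tri B1.N_tri)
    finally show "sn (x + y) - (N0 a' + N1 b') \<le> N0 a + N1 b" by simp
  qed
  then have "sn (x + y) - sn x \<le> sn y" by (intro sn_ge[OF y]) force
  then show ?thesis by simp
qed

lemma sn_sc: assumes x: "x \<in> SS" shows "sn (sc c x) \<le> cmod c * sn x"
proof (cases "c = 0")
  case True
  then show ?thesis using sn_le[of 0 0] B0.mem0 B1.mem0 sn_nonneg[OF x] by simp
next
  case False
  have "sn (sc c x) / cmod c \<le> sn x"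
  proof (rule sn_ge[OF x])
    fix a b assume ab: "a \<in> S0" "b \<in> S1" "x = a + b"
    have "sn (sc c x) \<le> N0 (sc c a) + N1 (sc c b)"
      using sn_le[OF B0.mem_sc[OF ab(1)] B1.mem_sc[OF ab(2)]] ab(3) by (simp add: scale_right_distrib)
    also have "\<dots> = cmod c * (N0 a + N1 b)" using ab B0.N_sc B1.N_sc by (simp add: algebra_simps)
    finally show "sn (sc c x) / cmod c \<le> N0 a + N1 b" using False by (simp add: field_simps)
  qed
  then show ?thesis using False by (simp add: field_simps)
qed

lemma sn_neg: "x \<in> SS \<Longrightarrow> sn (- x) = sn x"
  using sn_sc[of x "-1"] sn_sc[of "-x" "-1"] ss_neg[of x] by simp

lemma sn_commute: "x \<in> SS \<Longrightarrow> y \<in> SS \<Longrightarrow> sn (x - y) = sn (y - x)"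
  using sn_neg[OF ss_diff[of x y]] by simp

lemma sn_tri3: "x \<in> SS \<Longrightarrow> y \<in> SS \<Longrightarrow> z \<in> SS \<Longrightarrow> sn (x - z) \<le> sn (x - y) + sn (y - z)"
  using sn_tri[OF ss_diff[of x y] ss_diff[of y z]] by simp

lemma sn_eq0: "x \<in> SS \<Longrightarrow> sn x = 0 \<Longrightarrow> x = 0"
  using bc unfolding banach_couple_def by blast

lemma sn_unique_gen:
  assumes "\<forall>\<^sub>F n in F. u n \<in> SS" "F \<noteq> bot" "x \<in> SS" "y \<in> SS"
    "((\<lambda>n. sn (u n - x)) \<longlongrightarrow> 0) F" "((\<lambda>n. sn (u n - y)) \<longlongrightarrow> 0) F"
  shows "x = y"
proof -
  have le: "\<forall>\<^sub>F n in F. sn (x - y) \<le> sn (u n - x) + sn (u n - y)"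
    using assms(1)
  proof eventually_elim
    case (elim n)
    then show ?case using sn_tri3[OF assms(3) elim assms(4)] sn_commute[OF elim assms(3)] by simp
  qed
  have "((\<lambda>n. sn (u n - x) + sn (u n - y)) \<longlongrightarrow> 0) F"
    using tendsto_add[OF assms(5,6)] by simp
  then have "sn (x - y) \<le> 0"
    using le assms(2) by (intro tendsto_le[OF _ _ tendsto_const]) auto
  then have "sn (x - y) = 0" using sn_nonneg[OF ss_diff[OF assms(3,4)]] by simp
  then show ?thesis using sn_eq0[OF ss_diff[OF assms(3,4)]] by simp
qed

end


lemma symsum:
  fixes h :: "int \<Rightarrow> 'a::ab_group_add"
  shows "(\<Sum>n\<in>{- int K..int K}. h n) = (\<Sum>k<Suc K. h (int k)) + (\<Sum>k<Suc K. if k = 0 then 0 else h (- int k))"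
proof (induction K)
  case 0 then show ?case by simp
next
  case (Suc K)
  have set: "{- int (Suc K)..int (Suc K)} = insert (int (Suc K)) (insert (- int (Suc K)) {- int K..int K})"
    by auto
  have "(\<Sum>n\<in>{- int (Suc K)..int (Suc K)}. h n) = h (int (Suc K)) + (h (- int (Suc K)) + (\<Sum>n\<in>{- int K..int K}. h n))"
    unfolding set by (subst sum.insert; simp)+
  also have "\<dots> = (\<Sum>k<Suc (Suc K). h (int k)) + (\<Sum>k<Suc (Suc K). if k = 0 then 0 else h (- int k))"
    unfolding Suc by (simp only: sum.lessThan_Suc) (simp add: algebra_simps)
  finally show ?case .
qed

context couple begin

lemma laurent_unique:
  assumes "\<And>n. b n \<in> SS" "laurent_sums sc S0 N0 S1 N1 b z y" "laurent_sums sc S0 N0 S1 N1 b z y'"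
  shows "y = y'"
  using assms unfolding laurent_sums_def
  by (intro sn_unique_gen[of "\<lambda>K. \<Sum>n\<in>{- int K..int K}. sc (z powi n) (b n)" sequentially])
     (auto intro!: ss_sum ss_sc always_eventually)

lemma laurent_val_eq:
  assumes "\<And>n. b n \<in> SS" "laurent_sums sc S0 N0 S1 N1 b z y"
  shows "laurent_val sc S0 N0 S1 N1 b z = y"
  unfolding laurent_val_def using laurent_unique[of b, OF assms(1)] assms(2) by blast

end

locale main = couple sc S0 N0 S1 N1 for sc :: "complex \<Rightarrow> 'v::ab_group_add \<Rightarrow> 'v" and S0 N0 S1 N1 +
  fixes X0 X1 :: "'v pseudolat"
  assumes pl0: "pseudolattice sc X0" and pl1: "pseudolattice sc X1"
    and ti0: "translation_invariant sc X0" and ti1: "translation_invariant sc X1"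
begin

abbreviation "XS0 \<equiv> fst (X0 S0 N0)"
abbreviation "XN0 \<equiv> snd (X0 S0 N0)"
abbreviation "XS1 \<equiv> fst (X1 S1 N1)"
abbreviation "XN1 \<equiv> snd (X1 S1 N1)"

sublocale Y0: cb "seqscale sc" XS0 XN0
  by (rule cb.intro[OF vs_seqscale[OF vector_space_axioms]])
     (use pl0 B0.cbn in \<open>simp add: cb_axioms_def pseudolattice_def\<close>)
sublocale Y1: cb "seqscale sc" XS1 XN1
  by (rule cb.intro[OF vs_seqscale[OF vector_space_axioms]])
     (use pl1 B1.cbn in \<open>simp add: cb_axioms_def pseudolattice_def\<close>)

lemma X0_sub: "b \<in> XS0 \<Longrightarrow> b n \<in> S0"
  using pl0 B0.cbn unfolding pseudolattice_def by blast
lemma X1_sub: "b \<in> XS1 \<Longrightarrow> b n \<in> S1"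
  using pl1 B1.cbn unfolding pseudolattice_def by blast
lemma X0_coord: "b \<in> XS0 \<Longrightarrow> N0 (b m) \<le> XN0 b"
  using pl0 B0.cbn unfolding pseudolattice_def by blast
lemma X1_coord: "b \<in> XS1 \<Longrightarrow> N1 (b m) \<le> XN1 b"
  using pl1 B1.cbn unfolding pseudolattice_def by blast
lemma X0_shift: "b \<in> XS0 \<Longrightarrow> (\<lambda>n. b (n + k)) \<in> XS0 \<and> XN0 (\<lambda>n. b (n + k)) = XN0 b"
  using ti0 B0.cbn unfolding translation_invariant_def by blast
lemma X1_shift: "b \<in> XS1 \<Longrightarrow> (\<lambda>n. b (n + k)) \<in> XS1 \<and> XN1 (\<lambda>n. b (n + k)) = XN1 b"
  using ti1 B1.cbn unfolding translation_invariant_def by blast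

abbreviation "J \<equiv> Jset sc X0 X1 S0 N0 S1 N1"
definition W :: "(int \<Rightarrow> 'v) \<Rightarrow> int \<Rightarrow> 'v" where
  "W b = (\<lambda>n. sc (complex_of_real (exp (real_of_int n))) (b n))"

lemma J_facts: assumes "b \<in> J" shows "b n \<in> S0" "b n \<in> S1" "b \<in> XS0" "W b \<in> XS1"
  using assms unfolding Jset_def W_def by auto

lemma J_b0: "b \<in> J \<Longrightarrow> N0 (b n) \<le> XN0 b"
  using X0_coord J_facts by blast

lemma J_b1: assumes "b \<in> J" shows "N1 (b n) \<le> XN1 (W b) * exp (- real_of_int n)"
proof -
  have "N1 (W b n) = exp (real_of_int n) * N1 (b n)"
    unfolding W_def using B1.N_sc[OF J_facts(2)[OF assms]] by simp
  then have "exp (real_of_int n) * N1 (b n) \<le> XN1 (W b)" using X1_coord[OF J_facts(4)[OF assms]] by metis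
  then show ?thesis by (simp add: field_simps exp_minus)
qed

lemma J_b1n: assumes "b \<in> J" shows "N1 (b (int k)) \<le> XN1 (W b) * exp (- 1) ^ k"
  using J_b1[OF assms, of "int k"] by (simp add: exp_of_nat_mult[symmetric])

lemma annulusD: "z \<in> annulus \<Longrightarrow> 1 < cmod z \<and> cmod z < exp 1"
  unfolding annulus_def by auto

definition posc :: "(int \<Rightarrow> 'v) \<Rightarrow> nat \<Rightarrow> 'v" where "posc b = (\<lambda>k. b (int k))"
definition negc :: "(int \<Rightarrow> 'v) \<Rightarrow> nat \<Rightarrow> 'v" where "negc b = (\<lambda>k. if k = 0 then 0 else b (- int k))"
definition Pos where "Pos b z = B1.PS (posc b) z"
definition Neg where "Neg b z = B0.PS (negc b) (1 / z)"

lemma posc: assumes "b \<in> J" shows "posc b k \<in> S1" "N1 (posc b k) \<le> XN1 (W b) * exp (- 1) ^ k"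
  using J_facts[OF assms] J_b1n[OF assms] unfolding posc_def by auto

lemma negc: assumes "b \<in> J" shows "negc b k \<in> S0" "N0 (negc b k) \<le> XN0 b * 1 ^ k"
  using J_facts[OF assms] J_b0[OF assms] B0.mem0 Y0.N_nonneg unfolding negc_def by auto

lemma posq: "z \<in> annulus \<Longrightarrow> cmod z * exp (- 1) < 1"
  using annulusD[of z] by (simp add: exp_minus field_simps)
lemma negq: "z \<in> annulus \<Longrightarrow> cmod (1 / z) * 1 < 1"
  using annulusD[of z] by (simp add: norm_divide divide_less_eq_1)

lemma Pos_conv: "b \<in> J \<Longrightarrow> z \<in> annulus \<Longrightarrow>
   Pos b z \<in> S1 \<and> (\<lambda>n. N1 ((\<Sum>k<n. sc (z^k) (posc b k)) - Pos b z)) \<longlonglongrightarrow> 0"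
  unfolding Pos_def by (rule B1.PS_conv[OF posc(1) posc(2) _ posq]) auto

lemma Neg_conv: "b \<in> J \<Longrightarrow> z \<in> annulus \<Longrightarrow>
   Neg b z \<in> S0 \<and> (\<lambda>n. N0 ((\<Sum>k<n. sc ((1/z)^k) (negc b k)) - Neg b z)) \<longlonglongrightarrow> 0"
  unfolding Neg_def by (rule B0.PS_conv[OF negc(1) negc(2) _ negq]) auto

lemma laurent_PN:
  assumes b: "b \<in> J" and z: "z \<in> annulus"
  shows "laurent_sums sc S0 N0 S1 N1 b z (Pos b z + Neg b z)"
proof -
  note P = Pos_conv[OF b z] and Ng = Neg_conv[OF b z]
  let ?pp = "\<lambda>n. \<Sum>k<n. sc (z^k) (posc b k)" and ?np = "\<lambda>n. \<Sum>k<n. sc ((1/z)^k) (negc b k)"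
  have z0: "z \<noteq> 0" using annulusD[OF z] by auto
  have eq: "(\<Sum>n\<in>{- int K..int K}. sc (z powi n) (b n)) = ?pp (Suc K) + ?np (Suc K)" for K
    unfolding symsum posc_def negc_def
    by (intro arg_cong2[where f="(+)"] sum.cong) (auto simp: power_int_minus power_one_over inverse_eq_divide)
  have ppS: "?pp n \<in> S1" for n using posc[OF b] by (auto intro!: B1.mem_sum B1.mem_sc)
  have npS: "?np n \<in> S0" for n using negc[OF b] by (auto intro!: B0.mem_sum B0.mem_sc)
  have le: "sn ((\<Sum>n\<in>{- int K..int K}. sc (z powi n) (b n)) - (Pos b z + Neg b z))
     \<le> N0 (?np (Suc K) - Neg b z) + N1 (?pp (Suc K) - Pos b z)" for K
  proof -
    have e: "(\<Sum>n\<in>{- int K..int K}. sc (z powi n) (b n)) - (Pos b z + Neg b z)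
        = (?np (Suc K) - Neg b z) + (?pp (Suc K) - Pos b z)" unfolding eq by (simp add: algebra_simps)
    have m: "sn ((?np (Suc K) - Neg b z) + (?pp (Suc K) - Pos b z)) \<le> N0 (?np (Suc K) - Neg b z) + N1 (?pp (Suc K) - Pos b z)"
      by (rule sn_le[OF B0.mem_diff[OF npS conjunct1[OF Ng]] B1.mem_diff[OF ppS conjunct1[OF P]]])
    show ?thesis unfolding e by (rule m)
  qed
  have ge: "0 \<le> sn ((\<Sum>n\<in>{- int K..int K}. sc (z powi n) (b n)) - (Pos b z + Neg b z))" for K
    using P Ng J_facts[OF b] by (intro sn_nonneg ss_diff ss_add ss0 ss1 ss_sum ss_sc) auto
  have lim: "(\<lambda>K. N0 (?np (Suc K) - Neg b z) + N1 (?pp (Suc K) - Pos b z)) \<longlonglongrightarrow> 0 + 0"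
    using P Ng by (intro tendsto_add LIMSEQ_Suc) auto
  show ?thesis unfolding laurent_sums_def
  proof
    show "Pos b z + Neg b z \<in> SS" using P Ng by (intro ss_add ss0 ss1) auto
    show "(\<lambda>K. sn ((\<Sum>n\<in>{- int K..int K}. sc (z powi n) (b n)) - (Pos b z + Neg b z))) \<longlonglongrightarrow> 0"
    proof (rule tendsto_sandwich[OF always_eventually always_eventually tendsto_const,
        where h="\<lambda>K. N0 (?np (Suc K) - Neg b z) + N1 (?pp (Suc K) - Pos b z)"])
      show "\<forall>K. 0 \<le> sn ((\<Sum>n\<in>{- int K..int K}. sc (z powi n) (b n)) - (Pos b z + Neg b z))" using ge by blast
      show "\<forall>K. sn ((\<Sum>n\<in>{- int K..int K}. sc (z powi n) (b n)) - (Pos b z + Neg b z)) \<le> N0 (?np (Suc K) - Neg b z) + N1 (?pp (Suc K) - Pos b z)" using le by blast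
      show "(\<lambda>K. N0 (?np (Suc K) - Neg b z) + N1 (?pp (Suc K) - Pos b z)) \<longlonglongrightarrow> 0" using lim by simp
    qed
  qed
qed

lemma J_SS: "b \<in> J \<Longrightarrow> b n \<in> SS" using J_facts ss0 by blast

lemma laurent_val_PN: "b \<in> J \<Longrightarrow> z \<in> annulus \<Longrightarrow> laurent_val sc S0 N0 S1 N1 b z = Pos b z + Neg b z"
  by (rule laurent_val_eq[OF J_SS laurent_PN])

end


lemma sum_fun_apply: "(\<Sum>j\<in>A. (u j :: 'a \<Rightarrow> 'b::comm_monoid_add)) n = (\<Sum>j\<in>A. u j n)"
  by (induction A rule: infinite_finite_induct) auto

locale lem = main sc S0 N0 S1 N1 X0 X1 for sc :: "complex \<Rightarrow> 'v::ab_group_add \<Rightarrow> 'v" and S0 N0 S1 N1 X0 X1 +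
  fixes f :: "int \<Rightarrow> 'v" and s :: complex
  assumes fJ: "f \<in> J" and sA: "s \<in> annulus" and fs0: "laurent_val sc S0 N0 S1 N1 f s = 0"
begin

abbreviation "A0 \<equiv> XN0 f"
abbreviation "A1 \<equiv> XN1 (W f)"

lemma s0: "s \<noteq> 0" using annulusD[OF sA] by auto

definition c0 :: "int \<Rightarrow> nat \<Rightarrow> 'v" where "c0 n = (\<lambda>j. f (n - int j))"
definition c1 :: "int \<Rightarrow> nat \<Rightarrow> 'v" where "c1 n = (\<lambda>j. f (n + 1 + int j))"
definition gc :: "int \<Rightarrow> 'v" where "gc n = - sc (1/s) (B0.PS (c0 n) (1/s))"
definition T :: "int \<Rightarrow> 'v" where "T n = B1.PS (c1 n) s"

lemma c0: "c0 n k \<in> S0" "N0 (c0 n k) \<le> A0 * 1^k"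
  using J_facts[OF fJ] J_b0[OF fJ] unfolding c0_def by auto

lemma c1: "c1 n k \<in> S1" "N1 (c1 n k) \<le> (A1 * exp (- real_of_int (n + 1))) * exp (- 1) ^ k"
proof -
  show "c1 n k \<in> S1" using J_facts[OF fJ] unfolding c1_def by auto
  have "exp (- real_of_int (n + 1 + int k)) = exp (- real_of_int (n + 1)) * exp (- 1) ^ k"
    by (simp add: exp_of_nat_mult[symmetric] exp_add[symmetric] algebra_simps)
  then show "N1 (c1 n k) \<le> (A1 * exp (- real_of_int (n + 1))) * exp (- 1) ^ k"
    using J_b1[OF fJ, of "n + 1 + int k"] unfolding c1_def by (simp add: mult.assoc)
qed

lemma c0_conv: "B0.PS (c0 n) (1/s) \<in> S0 \<and> (\<lambda>J. N0 ((\<Sum>k<J. sc ((1/s)^k) (c0 n k)) - B0.PS (c0 n) (1/s))) \<longlonglongrightarrow> 0"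
  by (rule B0.PS_conv[OF c0(1) c0(2) _ negq[OF sA]]) simp
lemma c1_conv: "B1.PS (c1 n) s \<in> S1 \<and> (\<lambda>J. N1 ((\<Sum>k<J. sc (s^k) (c1 n k)) - B1.PS (c1 n) s)) \<longlonglongrightarrow> 0"
  by (rule B1.PS_conv[OF c1(1) c1(2) _ posq[OF sA]]) simp

lemma gc_S0: "gc n \<in> S0" unfolding gc_def using c0_conv by (auto intro!: B0.mem_neg B0.mem_sc)
lemma T_S1: "T n \<in> S1" unfolding T_def using c1_conv by auto

lemma R0: "sc s (gc n) = - f n + gc (n - 1)"
proof -
  have sh: "B0.PS (c0 n) (1/s) = c0 n 0 + sc (1/s) (B0.PS (\<lambda>k. c0 n (Suc k)) (1/s))"
    by (rule B0.PS_shift[OF c0(1) c0(2) _ negq[OF sA]]) simp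
  have "(\<lambda>k. c0 n (Suc k)) = c0 (n - 1)" by (auto simp: c0_def algebra_simps)
  then have "B0.PS (c0 n) (1/s) = f n + sc (1/s) (B0.PS (c0 (n - 1)) (1/s))" using sh by (simp add: c0_def)
  moreover have "s * (1 / (s * s)) = 1 / s" using s0 by (simp add: field_simps)
  ultimately show ?thesis unfolding gc_def using s0 by (simp add: scale_right_distrib scale_right_diff_distrib)
qed

lemma R1: "T n = f (n + 1) + sc s (T (n + 1))"
proof -
  have sh: "B1.PS (c1 n) s = c1 n 0 + sc s (B1.PS (\<lambda>k. c1 n (Suc k)) s)"
    by (rule B1.PS_shift[OF c1(1) c1(2) _ posq[OF sA]]) simp
  have "(\<lambda>k. c1 n (Suc k)) = c1 (n + 1)" by (auto simp: c1_def algebra_simps)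
  then show ?thesis using sh unfolding T_def by (simp add: c1_def)
qed

lemma D_rec: "sc s (T n - gc n) = T (n - 1) - gc (n - 1)"
  using R0[of n] R1[of "n - 1"] by (simp add: scale_right_diff_distrib algebra_simps)

lemma D0: "T 0 - gc 0 = 0"
proof -
  have "laurent_val sc S0 N0 S1 N1 f s = Pos f s + Neg f s" by (rule laurent_val_PN[OF fJ sA])
  moreover have "Pos f s = T (- 1)"
  proof -
    have "posc f = c1 (- 1)" by (auto simp: posc_def c1_def)
    then show ?thesis by (simp add: Pos_def T_def)
  qed
  moreover have "Neg f s = - gc (- 1)"
  proof -
    have negc: "\<And>k. negc f k \<in> S0" "\<And>k. N0 (negc f k) \<le> A0 * 1 ^ k" using negc[OF fJ] by auto
    have sh: "B0.PS (negc f) (1/s) = negc f 0 + sc (1/s) (B0.PS (\<lambda>k. negc f (Suc k)) (1/s))"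
      by (rule B0.PS_shift[OF negc _ negq[OF sA]]) simp
    have "(\<lambda>k. negc f (Suc k)) = c0 (- 1)" by (auto simp: negc_def c0_def algebra_simps)
    then show ?thesis using sh unfolding Neg_def gc_def by (simp add: negc_def)
  qed
  ultimately have "T (- 1) - gc (- 1) = 0" using fs0 by simp
  then have "sc s (T 0 - gc 0) = 0" using D_rec[of 0] by simp
  then show ?thesis using s0 by simp
qed

lemma gc_eq_T: "gc n = T n"
proof -
  have "T n - gc n = 0"
  proof (induction n rule: int_induct[where k=0])
    case base then show ?case by (rule D0)
  next
    case (step1 i)
    have "sc s (T (i + 1) - gc (i + 1)) = 0" using D_rec[of "i + 1"] step1 by simp
    then show ?case using s0 by simp
  next
    case (step2 i)
    then show ?case using D_rec[of i] by simp
  qed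
  then show ?thesis by simp
qed

lemma gc_S1: "gc n \<in> S1" using gc_eq_T T_S1 by simp

end


context main begin

lemma X0_coord_conv:
  assumes "\<And>J. P J \<in> XS0" "G \<in> XS0" "(\<lambda>J. XN0 (P J - G)) \<longlonglongrightarrow> 0"
  shows "(\<lambda>J. N0 (P J n - G n)) \<longlonglongrightarrow> 0"
proof (rule tendsto_sandwich[OF always_eventually always_eventually tendsto_const assms(3)])
  show "\<forall>J. 0 \<le> N0 (P J n - G n)" using assms X0_sub by (auto intro!: B0.N_nonneg B0.mem_diff)
  show "\<forall>J. N0 (P J n - G n) \<le> XN0 (P J - G)"
    using X0_coord[OF Y0.mem_diff[OF assms(1) assms(2)]] by simp
qed

lemma X1_coord_conv:
  assumes "\<And>J. P J \<in> XS1" "G \<in> XS1" "(\<lambda>J. XN1 (P J - G)) \<longlonglongrightarrow> 0"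
  shows "(\<lambda>J. N1 (P J n - G n)) \<longlonglongrightarrow> 0"
proof (rule tendsto_sandwich[OF always_eventually always_eventually tendsto_const assms(3)])
  show "\<forall>J. 0 \<le> N1 (P J n - G n)" using assms X1_sub by (auto intro!: B1.N_nonneg B1.mem_diff)
  show "\<forall>J. N1 (P J n - G n) \<le> XN1 (P J - G)"
    using X1_coord[OF Y1.mem_diff[OF assms(1) assms(2)]] by simp
qed

end

context lem begin

lemma geo_sum:
  fixes q A :: real assumes "0 \<le> q" "q < 1"
  shows "(\<lambda>j. A * q ^ Suc j) sums (A * q / (1 - q))"
proof -
  have "(\<lambda>j. (A * q) * q ^ j) sums ((A * q) * (1 / (1 - q)))"
    by (rule sums_mult[OF geometric_sums]) (use assms in simp)
  then show ?thesis by (simp add: mult.assoc)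
qed

lemma gc_X0: "gc \<in> XS0 \<and> XN0 gc \<le> A0 / (cmod s - 1)"
proof -
  define u where "u j = seqscale sc (- ((1/s) ^ Suc j)) (\<lambda>n. f (n + - int j))" for j
  have sh: "(\<lambda>n. f (n + - int j)) \<in> XS0 \<and> XN0 (\<lambda>n. f (n + - int j)) = A0" for j
    using X0_shift[OF J_facts(3)[OF fJ]] by blast
  have uS: "u j \<in> XS0" for j unfolding u_def using sh Y0.mem_sc by blast
  have q: "0 \<le> 1 / cmod s" "1 / cmod s < 1" using annulusD[OF sA] by (auto simp: divide_less_eq_1)
  have ub: "XN0 (u j) \<le> A0 * (1 / cmod s) ^ Suc j" for j
    unfolding u_def using Y0.N_sc[of "\<lambda>n. f (n + - int j)" "- ((1/s) ^ Suc j)"] sh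
    by (simp add: norm_power norm_divide mult.commute)
  have sm: "(\<lambda>j. A0 * (1 / cmod s) ^ Suc j) sums (A0 * (1 / cmod s) / (1 - 1 / cmod s))"
    by (rule geo_sum[OF q])
  have val: "A0 * (1 / cmod s) / (1 - 1 / cmod s) = A0 / (cmod s - 1)"
    using annulusD[OF sA] s0 by (simp add: field_simps)
  obtain G where G: "G \<in> XS0" "(\<lambda>J. XN0 ((\<Sum>j<J. u j) - G)) \<longlonglongrightarrow> 0"
      "XN0 G \<le> suminf (\<lambda>j. A0 * (1 / cmod s) ^ Suc j)"
    using Y0.series[OF uS ub sums_summable[OF sm]] by blast
  have coord: "(\<Sum>j<J. u j) n = - sc (1/s) (\<Sum>j<J. sc ((1/s)^j) (c0 n j))" for J n
    unfolding sum_fun_apply u_def seqscale_def c0_def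
    by (simp add: scale_sum_right sum_negf mult.commute)
  have "G n = gc n" for n
  proof (rule B0.lim_unique[where u="\<lambda>J. (\<Sum>j<J. u j) n"])
    show "(\<Sum>j<J. u j) n \<in> S0" for J using X0_sub[OF Y0.mem_sum[of "{..<J}" u, OF uS]] by blast
    show "G n \<in> S0" "gc n \<in> S0" using X0_sub[OF G(1)] gc_S0 by auto
    show "(\<lambda>J. N0 ((\<Sum>j<J. u j) n - G n)) \<longlonglongrightarrow> 0"
      by (rule X0_coord_conv[OF Y0.mem_sum[of "{..<_}" u, OF uS] G(1) G(2)])
    have "(\<lambda>J. N0 (sc (1/s) (\<Sum>j<J. sc ((1/s)^j) (c0 n j)) - sc (1/s) (B0.PS (c0 n) (1/s)))) \<longlonglongrightarrow> 0"
      by (rule B0.conv_sc) (use c0_conv c0 in \<open>auto intro!: B0.mem_sum B0.mem_sc\<close>)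
    moreover have "N0 ((\<Sum>j<J. u j) n - gc n) = N0 (sc (1/s) (\<Sum>j<J. sc ((1/s)^j) (c0 n j)) - sc (1/s) (B0.PS (c0 n) (1/s)))" for J
    proof -
      have "(\<Sum>j<J. u j) n - gc n = - (sc (1/s) (\<Sum>j<J. sc ((1/s)^j) (c0 n j)) - sc (1/s) (B0.PS (c0 n) (1/s)))"
        unfolding coord gc_def by simp
      moreover have m1: "sc (1/s) (B0.PS (c0 n) (1/s)) \<in> S0" using c0_conv B0.mem_sc by blast
      have m2: "sc (1/s) (\<Sum>j<J. sc ((1/s)^j) (c0 n j)) \<in> S0" using c0 by (auto intro!: B0.mem_sum B0.mem_sc)
      show ?thesis unfolding \<open>(\<Sum>j<J. u j) n - gc n = _\<close> using B0.N_neg[OF B0.mem_diff[OF m2 m1]] by simp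
    qed
    ultimately show "(\<lambda>J. N0 ((\<Sum>j<J. u j) n - gc n)) \<longlonglongrightarrow> 0" by simp
  qed
  then have "G = gc" by auto
  then show ?thesis using G sums_unique[OF sm] val by simp
qed


lemma gc_X1: "W gc \<in> XS1 \<and> XN1 (W gc) \<le> A1 / (exp 1 - cmod s)"
proof -
  define E where "E = exp (1::real)"
  have E0: "E > 0" by (simp add: E_def)
  define \<kappa> where "\<kappa> j = (s / complex_of_real E) ^ j / complex_of_real E" for j
  define u where "u j = seqscale sc (\<kappa> j) (\<lambda>n. W f (n + (int j + 1)))" for j
  have sh: "(\<lambda>n. W f (n + (int j + 1))) \<in> XS1 \<and> XN1 (\<lambda>n. W f (n + (int j + 1))) = A1" for j
    using X1_shift[OF J_facts(4)[OF fJ]] by blast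
  have uS: "u j \<in> XS1" for j unfolding u_def using sh Y1.mem_sc by blast
  have q: "0 \<le> cmod s / E" "cmod s / E < 1" using annulusD[OF sA] E0 by (auto simp: E_def)
  have ub: "XN1 (u j) \<le> (A1 / E) * (cmod s / E) ^ j" for j
  proof -
    have "cmod (\<kappa> j) = (cmod s / E) ^ j / E" unfolding \<kappa>_def using E0 by (simp add: norm_divide norm_power)
    then show ?thesis unfolding u_def using Y1.N_sc[of "\<lambda>n. W f (n + (int j + 1))" "\<kappa> j"] sh
      by (simp add: mult.commute)
  qed
  have sm: "(\<lambda>j. (A1 / E) * (cmod s / E) ^ j) sums ((A1 / E) * (1 / (1 - cmod s / E)))"
    by (rule sums_mult[OF geometric_sums]) (use q in simp)
  have val: "(A1 / E) * (1 / (1 - cmod s / E)) = A1 / (exp 1 - cmod s)"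
    using q E0 by (simp add: field_simps E_def)
  obtain H where H: "H \<in> XS1" "(\<lambda>J. XN1 ((\<Sum>j<J. u j) - H)) \<longlonglongrightarrow> 0"
      "XN1 H \<le> suminf (\<lambda>j. (A1 / E) * (cmod s / E) ^ j)"
    using Y1.series[OF uS ub sums_summable[OF sm]] by blast
  have scal: "\<kappa> j * complex_of_real (exp (real_of_int (n + (int j + 1)))) = complex_of_real (exp (real_of_int n)) * s ^ j" for j n
  proof -
    have "exp (real_of_int (n + (int j + 1))) = exp (real_of_int n) * E ^ j * E"
      by (simp add: E_def exp_add[symmetric] exp_of_nat_mult[symmetric] algebra_simps)
    then show ?thesis unfolding \<kappa>_def using E0 by (simp add: field_simps power_divide)
  qed
  have coord: "(\<Sum>j<J. u j) n = sc (complex_of_real (exp (real_of_int n))) (\<Sum>j<J. sc (s^j) (c1 n j))" for J n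
  proof -
    have uj: "u j n = sc (complex_of_real (exp (real_of_int n))) (sc (s^j) (c1 n j))" for j
      using scal[of j n] by (simp add: u_def seqscale_def c1_def W_def ac_simps)
    show ?thesis by (simp add: sum_fun_apply uj scale_sum_right)
  qed
  have "H n = W gc n" for n
  proof (rule B1.lim_unique[where u="\<lambda>J. (\<Sum>j<J. u j) n"])
    show "(\<Sum>j<J. u j) n \<in> S1" for J using X1_sub[OF Y1.mem_sum[of "{..<J}" u, OF uS]] by blast
    show "H n \<in> S1" "W gc n \<in> S1" using X1_sub[OF H(1)] gc_S1 B1.mem_sc by (auto simp: W_def)
    show "(\<lambda>J. N1 ((\<Sum>j<J. u j) n - H n)) \<longlonglongrightarrow> 0"
      by (rule X1_coord_conv[OF Y1.mem_sum[of "{..<_}" u, OF uS] H(1) H(2)])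
    have "(\<lambda>J. N1 (sc (complex_of_real (exp (real_of_int n))) (\<Sum>j<J. sc (s^j) (c1 n j)) - sc (complex_of_real (exp (real_of_int n))) (B1.PS (c1 n) s))) \<longlonglongrightarrow> 0"
      by (rule B1.conv_sc) (use c1_conv c1 in \<open>auto intro!: B1.mem_sum B1.mem_sc\<close>)
    moreover have "W gc n = sc (complex_of_real (exp (real_of_int n))) (B1.PS (c1 n) s)"
      unfolding W_def gc_eq_T T_def ..
    ultimately show "(\<lambda>J. N1 ((\<Sum>j<J. u j) n - W gc n)) \<longlonglongrightarrow> 0" unfolding coord by simp
  qed
  then have "H = W gc" by auto
  then show ?thesis using H sums_unique[OF sm] val by simp
qed

end


lemma telescope:
  fixes h :: "int \<Rightarrow> 'a::ab_group_add"
  shows "(\<Sum>n\<in>{- int K..int K}. h n - h (n - 1)) = h (int K) - h (- int K - 1)"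
proof (induction K)
  case 0 then show ?case by simp
next
  case (Suc K)
  have set: "{- int (Suc K)..int (Suc K)} = insert (int (Suc K)) (insert (- int (Suc K)) {- int K..int K})"
    by auto
  have "(\<Sum>n\<in>{- int (Suc K)..int (Suc K)}. h n - h (n - 1))
      = (h (int (Suc K)) - h (int (Suc K) - 1)) + ((h (- int (Suc K)) - h (- int (Suc K) - 1)) + (\<Sum>n\<in>{- int K..int K}. h n - h (n - 1)))"
    unfolding set by (subst sum.insert; simp)+
  also have "\<dots> = h (int (Suc K)) - h (- int (Suc K) - 1)"
  proof -
    have e: "- int K - 1 = int (Suc K) - 1 - 1 - 2 * int K" by simp
    show ?thesis unfolding Suc by (simp add: algebra_simps) (metis add.commute diff_conv_add_uminus)
  qed
  finally show ?case .
qed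

context lem begin

lemma gcJ: "gc \<in> J"
  using gc_S0 gc_S1 gc_X0 gc_X1 unfolding Jset_def W_def by auto

lemma Jnorm_bound:
  "Jnorm sc X0 X1 S0 N0 S1 N1 gc \<le> max (1 / (cmod s - 1)) (1 / (exp 1 - cmod s)) * Jnorm sc X0 X1 S0 N0 S1 N1 f"
proof -
  have A0: "A0 \<ge> 0" using Y0.N_nonneg J_facts(3)[OF fJ] by blast
  have A1: "A1 \<ge> 0" using Y1.N_nonneg J_facts(4)[OF fJ] by blast
  have s1: "cmod s - 1 > 0" "exp 1 - cmod s > 0" using annulusD[OF sA] by auto
  let ?d = "max (1 / (cmod s - 1)) (1 / (exp 1 - cmod s))"
  let ?M = "max A0 A1"
  have "XN0 gc \<le> A0 * (1 / (cmod s - 1))" using gc_X0 by simp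
  also have "\<dots> \<le> ?M * ?d" using A0 s1 by (intro mult_mono) auto
  finally have 1: "XN0 gc \<le> ?M * ?d" .
  have "XN1 (W gc) \<le> A1 * (1 / (exp 1 - cmod s))" using gc_X1 by simp
  also have "\<dots> \<le> ?M * ?d" using A1 s1 by (intro mult_mono) auto
  finally have 2: "XN1 (W gc) \<le> ?M * ?d" .
  have "Jnorm sc X0 X1 S0 N0 S1 N1 gc = max (XN0 gc) (XN1 (W gc))"
    "Jnorm sc X0 X1 S0 N0 S1 N1 f = ?M" unfolding Jnorm_def W_def by auto
  then show ?thesis using 1 2 by (simp add: mult.commute)
qed

abbreviation "FF \<equiv> laurent_val sc S0 N0 S1 N1 f"
abbreviation "GG \<equiv> laurent_val sc S0 N0 S1 N1 gc"

lemma gc_b0: "N0 (gc n) \<le> XN0 gc" using J_b0[OF gcJ] .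
lemma gc_b1: "N1 (gc n) \<le> XN1 (W gc) * exp (- real_of_int n)" using J_b1[OF gcJ] .

lemma laurent_off:
  assumes z: "z \<in> annulus" and zs: "z \<noteq> s"
  shows "laurent_sums sc S0 N0 S1 N1 gc z (sc (1 / (z - s)) (FF z))"
proof -
  have z0: "z \<noteq> 0" using annulusD[OF z] by auto
  have zs': "z - s \<noteq> 0" using zs by simp
  define h where "h n = sc (z powi (n + 1)) (gc n)" for n
  let ?Sg = "\<lambda>K. \<Sum>n\<in>{- int K..int K}. sc (z powi n) (gc n)"
  let ?Sf = "\<lambda>K. \<Sum>n\<in>{- int K..int K}. sc (z powi n) (f n)"
  have trm: "sc ((z - s) * z powi n) (gc n) = sc (z powi n) (f n) + (h n - h (n - 1))" for n
  proof -
    have "sc ((z - s) * z powi n) (gc n) = sc (z powi (n + 1)) (gc n) - sc (z powi n) (sc s (gc n))"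
      using z0 by (simp add: power_int_add algebra_simps scale_left_diff_distrib)
    also have "\<dots> = h n + sc (z powi n) (f n) - h (n - 1)"
      unfolding R0 h_def by (simp add: scale_right_distrib scale_right_diff_distrib)
    finally show ?thesis by (simp add: algebra_simps)
  qed
  have key: "?Sg K = sc (1 / (z - s)) (?Sf K + (h (int K) - h (- int K - 1)))" for K
  proof -
    have "sc (z - s) (?Sg K) = (\<Sum>n\<in>{- int K..int K}. sc ((z - s) * z powi n) (gc n))"
      by (simp add: scale_sum_right)
    also have "\<dots> = ?Sf K + (h (int K) - h (- int K - 1))"
      unfolding trm sum.distrib telescope ..
    finally have "sc (z - s) (?Sg K) = ?Sf K + (h (int K) - h (- int K - 1))" .
    then have "sc (1 / (z - s)) (sc (z - s) (?Sg K)) = sc (1 / (z - s)) (?Sf K + (h (int K) - h (- int K - 1)))"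
      by simp
    then show ?thesis using zs' by simp
  qed
  have FzPN: "FF z = Pos f z + Neg f z" by (rule laurent_val_PN[OF fJ z])
  have Lf: "laurent_sums sc S0 N0 S1 N1 f z (FF z)" unfolding FzPN by (rule laurent_PN[OF fJ z])
  then have FzS: "FF z \<in> SS" and Lf': "(\<lambda>K. sn (?Sf K - FF z)) \<longlonglongrightarrow> 0" unfolding laurent_sums_def by auto
  have SfS: "?Sf K \<in> SS" for K using J_SS[OF fJ] by (auto intro!: ss_sum ss_sc)
  have hS1: "h n \<in> S1" for n unfolding h_def using gc_S1 B1.mem_sc by blast
  have hS0: "h n \<in> S0" for n unfolding h_def using gc_S0 B0.mem_sc by blast
  define a where "a K = cmod (1 / (z - s)) * (sn (?Sf K - FF z) + N1 (h (int K)) + N0 (h (- int K - 1)))" for K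
  have le: "sn (?Sg K - sc (1 / (z - s)) (FF z)) \<le> a K" for K
  proof -
    have e: "?Sg K - sc (1 / (z - s)) (FF z) = sc (1 / (z - s)) ((?Sf K - FF z) + h (int K) + (- h (- int K - 1)))"
      unfolding key by (simp add: scale_right_diff_distrib scale_right_distrib algebra_simps)
    have m: "(?Sf K - FF z) + h (int K) + (- h (- int K - 1)) \<in> SS"
      by (rule ss_add[OF ss_add[OF ss_diff[OF SfS FzS] ss1[OF hS1]] ss_neg[OF ss0[OF hS0]]])
    have "sn (?Sg K - sc (1 / (z - s)) (FF z)) \<le> cmod (1 / (z - s)) * sn ((?Sf K - FF z) + h (int K) + (- h (- int K - 1)))"
      unfolding e by (rule sn_sc[OF m])
    also have "sn ((?Sf K - FF z) + h (int K) + (- h (- int K - 1))) \<le> sn (?Sf K - FF z) + sn (h (int K)) + sn (- h (- int K - 1))"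
    proof -
      have t1: "sn ((?Sf K - FF z) + h (int K) + (- h (- int K - 1))) \<le> sn ((?Sf K - FF z) + h (int K)) + sn (- h (- int K - 1))"
        by (rule sn_tri[OF ss_add[OF ss_diff[OF SfS[of K] FzS] ss1[OF hS1[of "int K"]]] ss_neg[OF ss0[OF hS0[of "- int K - 1"]]]])
      have t2: "sn ((?Sf K - FF z) + h (int K)) \<le> sn (?Sf K - FF z) + sn (h (int K))"
        by (rule sn_tri[OF ss_diff[OF SfS[of K] FzS] ss1[OF hS1[of "int K"]]])
      show ?thesis using t1 t2 by linarith
    qed
    also have "\<dots> \<le> sn (?Sf K - FF z) + N1 (h (int K)) + N0 (h (- int K - 1))"
      using sn_le1[OF hS1[of "int K"]] sn_le0[OF hS0[of "- int K - 1"]] sn_neg[OF ss0[OF hS0[of "- int K - 1"]]] by simp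
    finally show ?thesis unfolding a_def by (simp add: mult_left_mono)
  qed
  have ge: "0 \<le> sn (?Sg K - sc (1 / (z - s)) (FF z))" for K
    by (rule sn_nonneg[OF ss_diff[OF ss_sum ss_sc[OF FzS]]]) (auto intro!: ss_sc ss0 gc_S0 B0.mem_sc)
  have h1: "(\<lambda>K. N1 (h (int K))) \<longlonglongrightarrow> 0"
  proof (rule tendsto_sandwich[OF always_eventually always_eventually tendsto_const])
    show "\<forall>K. 0 \<le> N1 (h (int K))" using hS1 B1.N_nonneg by blast
    show "\<forall>K. N1 (h (int K)) \<le> (cmod z * XN1 (W gc)) * (cmod z / exp 1) ^ K"
    proof
      fix K
      have "N1 (h (int K)) = cmod z ^ (K + 1) * N1 (gc (int K))"
        unfolding h_def using B1.N_sc[OF gc_S1] by (simp add: norm_power_int power_int_add norm_mult norm_power)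
      also have "\<dots> \<le> cmod z ^ (K + 1) * (XN1 (W gc) * exp (- real K))"
        using gc_b1[of "int K"] by (intro mult_left_mono) auto
      also have "\<dots> = (cmod z * XN1 (W gc)) * (cmod z / exp 1) ^ K"
        by (simp add: exp_minus exp_of_nat_mult[symmetric] power_divide field_simps)
      finally show "N1 (h (int K)) \<le> (cmod z * XN1 (W gc)) * (cmod z / exp 1) ^ K" .
    qed
    show "(\<lambda>K. (cmod z * XN1 (W gc)) * (cmod z / exp 1) ^ K) \<longlonglongrightarrow> 0"
      using annulusD[OF z] by (intro tendsto_mult_right_zero LIMSEQ_power_zero) auto
  qed
  have h0: "(\<lambda>K. N0 (h (- int K - 1))) \<longlonglongrightarrow> 0"
  proof (rule tendsto_sandwich[OF always_eventually always_eventually tendsto_const])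
    show "\<forall>K. 0 \<le> N0 (h (- int K - 1))" using hS0 B0.N_nonneg by blast
    show "\<forall>K. N0 (h (- int K - 1)) \<le> XN0 gc * (1 / cmod z) ^ K"
    proof
      fix K
      have "N0 (h (- int K - 1)) = cmod (z powi (- int K)) * N0 (gc (- int K - 1))"
        unfolding h_def using B0.N_sc[OF gc_S0] by simp
      also have "cmod (z powi (- int K)) = (1 / cmod z) ^ K"
        by (simp add: norm_power_int power_int_minus power_one_over inverse_eq_divide norm_divide norm_power)
      finally show "N0 (h (- int K - 1)) \<le> XN0 gc * (1 / cmod z) ^ K"
        using gc_b0[of "- int K - 1"] by (simp add: mult.commute mult_left_mono)
    qed
    show "(\<lambda>K. XN0 gc * (1 / cmod z) ^ K) \<longlonglongrightarrow> 0"
      using annulusD[OF z] by (intro tendsto_mult_right_zero LIMSEQ_power_zero) (auto simp: divide_less_eq_1)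
  qed
  have alim: "a \<longlonglongrightarrow> cmod (1 / (z - s)) * (0 + 0 + 0)"
    unfolding a_def by (intro tendsto_mult tendsto_add tendsto_const Lf' h1 h0)
  show ?thesis unfolding laurent_sums_def
  proof
    show "sc (1 / (z - s)) (FF z) \<in> SS" using FzS by (rule ss_sc)
    show "(\<lambda>K. sn (?Sg K - sc (1 / (z - s)) (FF z))) \<longlonglongrightarrow> 0"
      by (rule tendsto_sandwich[OF always_eventually always_eventually tendsto_const, where h=a])
         (use ge le alim in auto)
  qed
qed

end


lemma open_annulus: "open annulus"
  unfolding annulus_def by (intro open_Collect_conj open_Collect_less continuous_intros)

context lem begin

lemma GG_PN: "z \<in> annulus \<Longrightarrow> GG z = Pos gc z + Neg gc z"
  by (rule laurent_val_PN[OF gcJ])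

lemma GG_off: "z \<in> annulus \<Longrightarrow> z \<noteq> s \<Longrightarrow> GG z = sc (1 / (z - s)) (FF z)"
  by (rule laurent_val_eq[OF J_SS[OF gcJ] laurent_off])

lemma ev_ann: "\<forall>\<^sub>F z in at s. z \<in> annulus \<and> z \<noteq> s"
proof -
  have "\<forall>\<^sub>F z in nhds s. z \<in> annulus" by (rule eventually_nhds_in_open[OF open_annulus sA])
  then show ?thesis unfolding eventually_at_filter by eventually_elim auto
qed

lemma G_cont: "((\<lambda>z. sn (GG z - GG s)) \<longlongrightarrow> 0) (at s)"
proof -
  have s0': "s \<noteq> 0" by (rule s0)
  have L1: "((\<lambda>z. N1 (Pos gc z - Pos gc s)) \<longlongrightarrow> 0) (at s)"
    unfolding Pos_def
    by (rule B1.PS_cont[OF posc(1)[OF gcJ] posc(2)[OF gcJ] _ posq[OF sA] tendsto_ident_at]) simp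
  have lim: "((\<lambda>z. 1 / z) \<longlongrightarrow> 1 / s) (at s)"
    using s0' by (intro tendsto_divide tendsto_const tendsto_ident_at) auto
  have L0: "((\<lambda>z. N0 (Neg gc z - Neg gc s)) \<longlongrightarrow> 0) (at s)"
    unfolding Neg_def
    by (rule B0.PS_cont[OF negc(1)[OF gcJ] negc(2)[OF gcJ] _ negq[OF sA] lim]) simp
  have PS: "Pos gc s \<in> S1" "Neg gc s \<in> S0" using Pos_conv[OF gcJ sA] Neg_conv[OF gcJ sA] by auto
  show ?thesis
  proof (rule tendsto_sandwich[OF _ _ tendsto_const, where h="\<lambda>z. N0 (Neg gc z - Neg gc s) + N1 (Pos gc z - Pos gc s)"])
    show "\<forall>\<^sub>F z in at s. 0 \<le> sn (GG z - GG s)"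
      using ev_ann
    proof eventually_elim
      case (elim z)
      have "Pos gc z \<in> S1" "Neg gc z \<in> S0" using Pos_conv[OF gcJ] Neg_conv[OF gcJ] elim by auto
      then show ?case unfolding GG_PN[OF sA] GG_PN[of z, OF conjunct1[OF elim]]
        by (rule sn_nonneg[OF ss_diff[OF ss_add[OF ss1 ss0] ss_add[OF ss1 ss0]]]) (use PS \<open>Pos gc z \<in> S1\<close> \<open>Neg gc z \<in> S0\<close> in auto)
    qed
    show "\<forall>\<^sub>F z in at s. sn (GG z - GG s) \<le> N0 (Neg gc z - Neg gc s) + N1 (Pos gc z - Pos gc s)"
      using ev_ann
    proof eventually_elim
      case (elim z)
      have Z: "Pos gc z \<in> S1" "Neg gc z \<in> S0" using Pos_conv[OF gcJ] Neg_conv[OF gcJ] elim by auto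
      have "GG z - GG s = (Neg gc z - Neg gc s) + (Pos gc z - Pos gc s)"
        unfolding GG_PN[OF sA] GG_PN[of z, OF conjunct1[OF elim]] by (simp add: algebra_simps)
      then show ?case using sn_le[OF B0.mem_diff[OF Z(2) PS(2)] B1.mem_diff[OF Z(1) PS(1)]] by simp
    qed
    show "((\<lambda>z. N0 (Neg gc z - Neg gc s) + N1 (Pos gc z - Pos gc s)) \<longlongrightarrow> 0) (at s)"
      using tendsto_add[OF L0 L1] by simp
  qed
qed

lemma GGs_SS: "GG s \<in> SS"
  unfolding GG_PN[OF sA] using Pos_conv[OF gcJ sA] Neg_conv[OF gcJ sA] by (intro ss_add ss1 ss0) auto

lemma deriv: "has_deriv_sum sc S0 N0 S1 N1 FF s (GG s)"
  unfolding has_deriv_sum_def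
proof
  show "GG s \<in> SS" by (rule GGs_SS)
  have "\<forall>\<^sub>F z in at s. sn (GG z - GG s) = sn (sc (1 / (z - s)) (FF z - FF s) - GG s)"
    using ev_ann by eventually_elim (simp add: GG_off fs0)
  then show "((\<lambda>z. sn (sc (1 / (z - s)) (FF z - FF s) - GG s)) \<longlongrightarrow> 0) (at s)"
    by (rule tendsto_cong[THEN iffD1, OF _ G_cont])
qed

lemma deriv_unique: "(THE D. has_deriv_sum sc S0 N0 S1 N1 FF s D) = GG s"
proof (rule the_equality[where P="\<lambda>D. has_deriv_sum sc S0 N0 S1 N1 FF s D", OF deriv])
  fix D assume D: "has_deriv_sum sc S0 N0 S1 N1 FF s D"
  have ev: "\<forall>\<^sub>F z in at s. sc (1 / (z - s)) (FF z - FF s) \<in> SS"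
    using ev_ann
  proof eventually_elim
    case (elim z)
    have "FF z \<in> SS" "FF s \<in> SS" using laurent_PN[OF fJ] laurent_val_PN[OF fJ] elim sA
      unfolding laurent_sums_def by auto
    then show ?case by (intro ss_sc ss_diff)
  qed
  show "D = GG s"
  proof (rule sn_unique_gen[OF ev _ _ GGs_SS])
    show "at s \<noteq> bot" by simp
    show "D \<in> SS" using D unfolding has_deriv_sum_def by blast
    show "((\<lambda>z. sn (sc (1 / (z - s)) (FF z - FF s) - D)) \<longlongrightarrow> 0) (at s)" using D unfolding has_deriv_sum_def by blast
    show "((\<lambda>z. sn (sc (1 / (z - s)) (FF z - FF s) - GG s)) \<longlongrightarrow> 0) (at s)" using deriv unfolding has_deriv_sum_def by blast
  qed
qed

lemma laurent_at_s: "laurent_sums sc S0 N0 S1 N1 gc s (THE D. has_deriv_sum sc S0 N0 S1 N1 FF s D)"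
  unfolding deriv_unique GG_PN[OF sA] by (rule laurent_PN[OF gcJ sA])

end


theorem lemma3p3:
  fixes sc :: "complex \<Rightarrow> 'v::ab_group_add \<Rightarrow> 'v"
    and S0 S1 :: "'v set" and N0 N1 :: "'v \<Rightarrow> real"
    and X0 X1 :: "'v pseudolat"
    and f :: "int \<Rightarrow> 'v" and s :: complex
  assumes "vector_space sc"
    and "banach_couple sc S0 N0 S1 N1"
    and "pseudolattice sc X0" and "pseudolattice sc X1"
    and "translation_invariant sc X0" and "translation_invariant sc X1"
    and "f \<in> Jset sc X0 X1 S0 N0 S1 N1"
    and "s \<in> annulus"
    and "laurent_val sc S0 N0 S1 N1 f s = 0"
  shows "let F = laurent_val sc S0 N0 S1 N1 f;
             g = (\<lambda>z. if z = s then (THE D. has_deriv_sum sc S0 N0 S1 N1 F s D)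
                      else sc (1 / (z - s)) (F z));
             \<delta> = max (1 / (cmod s - 1)) (1 / (exp 1 - cmod s))
         in in_F sc X0 X1 S0 N0 S1 N1 g
            \<and> (\<exists>gc\<in>Jset sc X0 X1 S0 N0 S1 N1.
                 (\<forall>z\<in>annulus. laurent_sums sc S0 N0 S1 N1 gc z (g z))
                 \<and> Jnorm sc X0 X1 S0 N0 S1 N1 gc \<le> \<delta> * Jnorm sc X0 X1 S0 N0 S1 N1 f)"
proof -
  interpret L: lem sc S0 N0 S1 N1 X0 X1 f s
    by (intro lem.intro main.intro couple.intro main_axioms.intro couple_axioms.intro lem_axioms.intro assms)
  let ?g = "\<lambda>z. if z = s then (THE D. has_deriv_sum sc S0 N0 S1 N1 (laurent_val sc S0 N0 S1 N1 f) s D)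
                      else sc (1 / (z - s)) (laurent_val sc S0 N0 S1 N1 f z)"
  have all: "\<forall>z\<in>annulus. laurent_sums sc S0 N0 S1 N1 L.gc z (?g z)"
    using L.laurent_at_s L.laurent_off by auto
  show ?thesis unfolding Let_def in_F_def
    using all L.gcJ L.Jnorm_bound by blast
qed


end
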